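(* Let $f_0,g_0:\mathbb{R}^n\to[-\infty,\infty]$ be proper, let $h:\mathbb{R}^m\to\mathbb{R}$ be Lipschitz continuous with modulus $\kappa:\mathbb{R}_+\to\mathbb{R}_+$, and let $f_i,g_i:\mathbb{R}^n\to\mathbb{R}$, $i=1,\dots,m$, be Lipschitz continuous with common modulus $\lambda:\mathbb{R}_+\to\mathbb{R}_+$. Set $F=(f_1,\dots,f_m)$, $G=(g_1,\dots,g_m)$, $f=f_0+h\circ F$ and $g=g_0+h\circ G$. Fix $\rho\in\mathbb{R}_+$ and let $\bar\rho\ge\rho+\max\{\sup_{x\in\mathbb{B}_2(0,\rho)}|h(F(x))|,\ \sup_{x\in\mathbb{B}_2(0,\rho)}|h(G(x))|\}$, $\hat\rho>\rho+\hat d_{\bar\rho}(\mathrm{epi}\,f_0,\mathrm{epi}\,g_0)$, and $\rho^*\ge\max\{\sup_{x\in\mathbb{B}_2(0,\hat\rho)}\|F(x)\|_2,\ \sup_{x\in\mathbb{B}_2(0,\hat\rho)}\|G(x)\|_2\}$. Then $$\hat d_\rho(\mathrm{epi}\,f,\mathrm{epi}\,g)\le\big(1+\sqrt m\,\kappa(\rho^* )\lambda(\hat\rho)\big)\,\hat d_{\bar\rho}(\mathrm{epi}\,f_0,\mathrm{epi}\,g_0)+\kappa(\rho^* )\sup_{x\in\mathbb{B}_2(0,\rho)}\|F(x)-G(x)\|_2,$$ where all truncated Hausdorff distances are taken in $\mathbb{R}^{n+1}$ with the norm $\|(x,\alpha)\|=\max\{\|x\|_2,|\alpha|\}$.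
   Context: A function is proper if it never takes the value $-\infty$ and is finite somewhere. $\mathrm{epi}\,f=\{(x,\alpha)\in\mathbb{R}^n\times\mathbb{R}\mid f(x)\le\alpha\}$. $\mathbb{B}_2(0,r)=\{x\mid\|x\|_2\le r\}$. A function $\psi:\mathbb{R}^k\to\mathbb{R}$ is Lipschitz continuous with modulus $\kappa:\mathbb{R}_+\to\mathbb{R}_+$ if $|\psi(u)-\psi(\bar u)|\le\kappa(r)\|u-\bar u\|_2$ for all $r\in\mathbb{R}_+$ and all $u,\bar u\in\mathbb{B}_2(0,r)$. For a norm $\|\cdot\|$ on a Euclidean space, $\mathrm{dist}(x,D)=\inf_{d\in D}\|x-d\|$ (with $\mathrm{dist}(x,\emptyset)=\infty$), $\mathbb{B}(0,r)$ is the closed $\|\cdot\|$-ball, and the excess of $C$ over $D$ is $\mathrm{exs}(C;D)=\sup_{x\in C}\mathrm{dist}(x,D)$ if $C,D\neq\emptyset$, $=\infty$ if $C\neq\emptyset=D$, and $=0$ if $C=\emptyset$. The truncated Hausdorff distance is $\hat d_r(C,D)=\max\{\mathrm{exs}(C\cap\mathbb{B}(0,r);D),\ \mathrm{exs}(D\cap\mathbb{B}(0,r);C)\}$. *)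

theory Defs
  imports "HOL-Analysis.Analysis" "HOL-Library.Extended_Real"
begin

definition proper_fun :: "('a \<Rightarrow> ereal) \<Rightarrow> bool" where
  "proper_fun f \<longleftrightarrow> (\<forall>x. f x \<noteq> -\<infinity>) \<and> (\<exists>x. f x \<noteq> \<infinity> \<and> f x \<noteq> -\<infinity>)"

definition epi :: "('a \<Rightarrow> ereal) \<Rightarrow> ('a \<times> real) set" where
  "epi f = {(x, \<alpha>). f x \<le> ereal \<alpha>}"

definition lipschitz_mod :: "('a::real_normed_vector \<Rightarrow> real) \<Rightarrow> (real \<Rightarrow> real) \<Rightarrow> bool" where
  "lipschitz_mod \<psi> \<kappa> \<longleftrightarrow>
     (\<forall>r\<ge>0. \<forall>u\<in>cball 0 r. \<forall>v\<in>cball 0 r. \<bar>\<psi> u - \<psi> v\<bar> \<le> \<kappa> r * norm (u - v))"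

definition mnorm :: "('a::real_normed_vector \<times> real) \<Rightarrow> real" where
  "mnorm p = max (norm (fst p)) \<bar>snd p\<bar>"

definition mball :: "real \<Rightarrow> ('a::real_normed_vector \<times> real) set" where
  "mball r = {p. mnorm p \<le> r}"

definition mdist_set :: "('a::real_normed_vector \<times> real) \<Rightarrow> ('a \<times> real) set \<Rightarrow> ereal" where
  "mdist_set p D = (INF d\<in>D. ereal (mnorm (p - d)))"

definition exs :: "('a::real_normed_vector \<times> real) set \<Rightarrow> ('a \<times> real) set \<Rightarrow> ereal" where
  "exs C D = (if C = {} then 0 else (SUP p\<in>C. mdist_set p D))"

definition trunc_haus :: "real \<Rightarrow> ('a::real_normed_vector \<times> real) set \<Rightarrow> ('a \<times> real) set \<Rightarrow> ereal" where
  "trunc_haus r C D = max (exs (C \<inter> mball r) D) (exs (D \<inter> mball r) C)"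

end

theory Submission
  imports Defs
begin
lemma vec_norm_le:
  fixes v :: "real^'m"
  assumes "\<forall>i. \<bar>v $ i\<bar> \<le> c"
  shows "norm v \<le> sqrt (real CARD('m)) * c"
proof -
  have c0: "c \<ge> 0" using assms abs_ge_zero order_trans by blast
  have "norm v = sqrt (\<Sum>i\<in>UNIV. (v $ i)^2)" by (simp add: norm_vec_def L2_set_def)
  also have "\<dots> \<le> sqrt (\<Sum>i\<in>(UNIV::'m set). c^2)"
    apply (rule real_sqrt_le_mono, rule sum_mono)
    using assms by (metis abs_le_square_iff abs_of_nonneg c0)
  also have "\<dots> = sqrt (real CARD('m)) * c" using c0 by (simp add: real_sqrt_mult)
  finally show ?thesis .
qed

lemma one_side:
  fixes f0 g0 :: "real^'n \<Rightarrow> ereal"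
    and h :: "real^'m \<Rightarrow> real"
    and F G :: "real^'n \<Rightarrow> real^'m"
    and \<kappa> lam :: "real \<Rightarrow> real"
    and \<rho> \<rho>bar \<rho>hat \<rho>star d :: real and \<eta> :: ereal
  assumes lh: "lipschitz_mod h \<kappa>"
    and lG: "\<forall>i. lipschitz_mod (\<lambda>x. G x $ i) lam"
    and r0: "\<rho> \<ge> 0" and rhat0: "\<rho>hat \<ge> 0" and rstar0: "\<rho>star \<ge> 0"
    and k0: "\<kappa> \<rho>star \<ge> 0" and l0: "lam \<rho>hat \<ge> 0"
    and hb: "\<forall>x\<in>cball 0 \<rho>. \<rho> + \<bar>h (F x)\<bar> \<le> \<rho>bar"
    and dh: "\<rho> + d < \<rho>hat"
    and Fb: "\<forall>x\<in>cball 0 \<rho>hat. norm (F x) \<le> \<rho>star \<and> norm (G x) \<le> \<rho>star"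
    and ex: "exs (epi f0 \<inter> mball \<rho>bar) (epi g0) \<le> ereal d"
    and eta: "\<forall>x\<in>cball 0 \<rho>. ereal (norm (F x - G x)) \<le> \<eta>"
    and eta0: "0 \<le> \<eta>" and d0: "d \<ge> 0"
  shows "exs (epi (\<lambda>x. f0 x + ereal (h (F x))) \<inter> mball \<rho>) (epi (\<lambda>x. g0 x + ereal (h (G x))))
     \<le> ereal ((1 + sqrt (real CARD('m)) * \<kappa> \<rho>star * lam \<rho>hat) * d) + ereal (\<kappa> \<rho>star) * \<eta>"
proof -
  define K where "K = 1 + sqrt (real CARD('m)) * \<kappa> \<rho>star * lam \<rho>hat"
  have K1: "K \<ge> 1" unfolding K_def using k0 l0 by simp
  have Keta0: "0 \<le> ereal (\<kappa> \<rho>star) * \<eta>" using k0 eta0 by simp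
  have main: "mdist_set p (epi (\<lambda>x. g0 x + ereal (h (G x)))) \<le> ereal (K * d) + ereal (\<kappa> \<rho>star) * \<eta>"
    if p: "p \<in> epi (\<lambda>x. f0 x + ereal (h (F x))) \<inter> mball \<rho>" for p
  proof (rule ereal_le_epsilon2)
    fix e :: real assume e: "e > 0"
    obtain x \<alpha> where px: "p = (x, \<alpha>)" by fastforce
    have fx: "f0 x + ereal (h (F x)) \<le> ereal \<alpha>" and xr: "norm x \<le> \<rho>" and ar: "\<bar>\<alpha>\<bar> \<le> \<rho>"
      using p px by (auto simp: epi_def mball_def mnorm_def)
    define \<alpha>0 where "\<alpha>0 = \<alpha> - h (F x)"
    have f0x: "f0 x \<le> ereal \<alpha>0" using fx unfolding \<alpha>0_def
      by (cases "f0 x") auto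
    have "\<rho> + \<bar>h (F x)\<bar> \<le> \<rho>bar" using hb xr by auto
    hence a0: "\<bar>\<alpha>0\<bar> \<le> \<rho>bar" unfolding \<alpha>0_def using ar by linarith
    have mem: "(x, \<alpha>0) \<in> epi f0 \<inter> mball \<rho>bar"
      using f0x a0 xr hb by (auto simp: epi_def mball_def mnorm_def)
    define \<epsilon> where "\<epsilon> = min (e / K) ((\<rho>hat - \<rho> - d) / 2)"
    have eps0: "\<epsilon> > 0" unfolding \<epsilon>_def using e K1 dh by simp
    have eps_le: "\<epsilon> \<le> (\<rho>hat - \<rho> - d) / 2" unfolding \<epsilon>_def by (rule min.cobounded2)
    have "mdist_set (x, \<alpha>0) (epi g0) \<le> exs (epi f0 \<inter> mball \<rho>bar) (epi g0)"
      using mem unfolding exs_def by (auto intro: SUP_upper)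
    also have "\<dots> < ereal (d + \<epsilon>)" using ex eps0 by (simp add: order_le_less_trans)
    finally obtain q where q: "q \<in> epi g0" and qd: "mnorm ((x, \<alpha>0) - q) < d + \<epsilon>"
      unfolding mdist_set_def by (auto simp: INF_less_iff)
    obtain y \<beta> where qy: "q = (y, \<beta>)" by fastforce
    have gy: "g0 y \<le> ereal \<beta>" using q qy by (simp add: epi_def)
    have xy: "norm (x - y) < d + \<epsilon>" and ab: "\<bar>\<alpha>0 - \<beta>\<bar> < d + \<epsilon>"
      using qd qy by (auto simp: mnorm_def)
    have yr: "norm y \<le> \<rho>hat"
    proof -
      have "norm y \<le> norm x + norm (x - y)" using norm_triangle_ineq2[of y x] norm_minus_commute[of y x] by linarith
      also have "\<dots> \<le> \<rho> + (d + \<epsilon>)" using xr xy by linarith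
      also have "\<dots> \<le> \<rho>hat" using dh eps_le by (simp add: field_simps)
      finally show ?thesis .
    qed
    have xr': "norm x \<le> \<rho>hat" using xr dh d0 by linarith
    have mem2: "(y, \<beta> + h (G y)) \<in> epi (\<lambda>x. g0 x + ereal (h (G x)))"
      using gy by (cases "g0 y") (auto simp: epi_def)
    have comp: "\<forall>i. \<bar>(G x - G y) $ i\<bar> \<le> lam \<rho>hat * norm (x - y)"
    proof
      fix i
      have "lipschitz_mod (\<lambda>x. G x $ i) lam" using lG by blast
      hence "\<bar>G x $ i - G y $ i\<bar> \<le> lam \<rho>hat * norm (x - y)"
        unfolding lipschitz_mod_def using rhat0 xr' yr by (simp add: dist_norm)
      thus "\<bar>(G x - G y) $ i\<bar> \<le> lam \<rho>hat * norm (x - y)" by simp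
    qed
    have Gxy: "norm (G x - G y) \<le> sqrt (real CARD('m)) * (lam \<rho>hat * norm (x - y))"
      by (rule vec_norm_le[OF comp])
    have FG: "norm (F x) \<le> \<rho>star" "norm (G y) \<le> \<rho>star" using Fb xr' yr by auto
    have hdiff: "\<bar>h (F x) - h (G y)\<bar> \<le> \<kappa> \<rho>star * norm (F x - G y)"
      using lh rstar0 FG unfolding lipschitz_mod_def by (simp add: dist_norm)
    have "norm (F x - G y) \<le> norm (F x - G x) + norm (G x - G y)"
      by (metis diff_add_cancel norm_triangle_ineq add_diff_eq diff_diff_eq2)
    hence hd2: "\<bar>h (F x) - h (G y)\<bar> \<le> \<kappa> \<rho>star * norm (F x - G x)
        + \<kappa> \<rho>star * (sqrt (real CARD('m)) * (lam \<rho>hat * norm (x - y)))"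
      using hdiff Gxy k0 by (smt (verit, best) distrib_left mult_left_mono)
    have nxy: "norm (x - y) \<le> d + \<epsilon>" using xy by simp
    have "mnorm ((x, \<alpha>) - (y, \<beta> + h (G y))) \<le> K * (d + \<epsilon>) + \<kappa> \<rho>star * norm (F x - G x)"
    proof -
      have "\<bar>\<alpha> - (\<beta> + h (G y))\<bar> \<le> \<bar>\<alpha>0 - \<beta>\<bar> + \<bar>h (F x) - h (G y)\<bar>"
        unfolding \<alpha>0_def by linarith
      also have "\<dots> \<le> (d + \<epsilon>) + \<kappa> \<rho>star * norm (F x - G x)
        + \<kappa> \<rho>star * (sqrt (real CARD('m)) * (lam \<rho>hat * (d + \<epsilon>)))"
        using ab hd2 nxy k0 l0 by (smt (verit, best) mult_left_mono real_sqrt_ge_zero of_nat_0_le_iff)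
      also have "\<dots> = K * (d + \<epsilon>) + \<kappa> \<rho>star * norm (F x - G x)"
        unfolding K_def by (simp add: algebra_simps)
      finally have 1: "\<bar>\<alpha> - (\<beta> + h (G y))\<bar> \<le> K * (d + \<epsilon>) + \<kappa> \<rho>star * norm (F x - G x)" .
      have "norm (x - y) \<le> K * (d + \<epsilon>)" using nxy K1 eps0 d0
        by (smt (verit) mult_le_cancel_right1)
      hence 2: "norm (x - y) \<le> K * (d + \<epsilon>) + \<kappa> \<rho>star * norm (F x - G x)"
        using k0 by (smt (verit) norm_ge_zero mult_nonneg_nonneg)
      show ?thesis using 1 2 by (simp add: mnorm_def)
    qed
    also have "K * (d + \<epsilon>) \<le> K * d + e"
    proof -
      have "K * \<epsilon> \<le> K * (e / K)" using K1 unfolding \<epsilon>_def by (intro mult_left_mono) auto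
      also have "\<dots> = e" using K1 by simp
      finally show ?thesis by (simp add: distrib_left)
    qed
    finally have bnd: "mnorm ((x, \<alpha>) - (y, \<beta> + h (G y))) \<le> K * d + e + \<kappa> \<rho>star * norm (F x - G x)" by simp
    have km: "ereal (\<kappa> \<rho>star * norm (F x - G x)) \<le> ereal (\<kappa> \<rho>star) * \<eta>"
    proof -
      have "ereal (\<kappa> \<rho>star * norm (F x - G x)) = ereal (\<kappa> \<rho>star) * ereal (norm (F x - G x))" by simp
      also have "\<dots> \<le> ereal (\<kappa> \<rho>star) * \<eta>"
        using eta xr k0 by (intro ereal_mult_left_mono) auto
      finally show ?thesis .
    qed
    have "mdist_set p (epi (\<lambda>x. g0 x + ereal (h (G x)))) \<le> ereal (mnorm ((x, \<alpha>) - (y, \<beta> + h (G y))))"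
      unfolding mdist_set_def px using mem2 by (rule INF_lower)
    also have "\<dots> \<le> ereal (K * d) + ereal e + ereal (\<kappa> \<rho>star * norm (F x - G x))"
      using bnd by simp
    also have "\<dots> \<le> ereal (K * d) + ereal e + ereal (\<kappa> \<rho>star) * \<eta>"
      using km by (rule add_left_mono)
    also have "\<dots> = ereal (K * d) + ereal (\<kappa> \<rho>star) * \<eta> + ereal e"
      by (metis add.assoc add.commute)
    finally show "mdist_set p (epi (\<lambda>x. g0 x + ereal (h (G x)))) \<le> ereal (K * d) + ereal (\<kappa> \<rho>star) * \<eta> + ereal e" .
  qed
  show ?thesis
    unfolding exs_def K_def[symmetric]
    using main Keta0 d0 K1
    by (auto intro!: SUP_least simp: add_nonneg_nonneg)
qed
lemma exs_nonneg: "0 \<le> exs C D"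
proof (cases "C = {}")
  case False
  then obtain c where c: "c \<in> C" by blast
  have "0 \<le> (INF d\<in>D. ereal (mnorm (c - d)))"
    by (rule INF_greatest) (simp add: mnorm_def le_max_iff_disj)
  also have "\<dots> \<le> (SUP p\<in>C. INF d\<in>D. ereal (mnorm (p - d)))"
    using c by (rule SUP_upper)
  finally show ?thesis using False by (simp add: exs_def mdist_set_def)
qed (simp add: exs_def)

theorem mainTheorem14:
  fixes f0 g0 :: "real^'n \<Rightarrow> ereal"
    and h :: "real^'m \<Rightarrow> real"
    and F G :: "real^'n \<Rightarrow> real^'m"
    and \<kappa> lam :: "real \<Rightarrow> real"
    and \<rho> \<rho>bar \<rho>hat \<rho>star :: real
  assumes "proper_fun f0" and "proper_fun g0"
    and "\<forall>r\<ge>0. \<kappa> r \<ge> 0" and "lipschitz_mod h \<kappa>"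
    and "\<forall>r\<ge>0. lam r \<ge> 0"
    and "\<forall>i. lipschitz_mod (\<lambda>x. F x $ i) lam"
    and "\<forall>i. lipschitz_mod (\<lambda>x. G x $ i) lam"
    and "\<rho> \<ge> 0"
    and "ereal \<rho>bar \<ge> ereal \<rho> + max (SUP x\<in>cball 0 \<rho>. ereal \<bar>h (F x)\<bar>)
                                        (SUP x\<in>cball 0 \<rho>. ereal \<bar>h (G x)\<bar>)"
    and "ereal \<rho>hat > ereal \<rho> + trunc_haus \<rho>bar (epi f0) (epi g0)"
    and "ereal \<rho>star \<ge> max (SUP x\<in>cball 0 \<rho>hat. ereal (norm (F x)))
                              (SUP x\<in>cball 0 \<rho>hat. ereal (norm (G x)))"
  shows "trunc_haus \<rho> (epi (\<lambda>x. f0 x + ereal (h (F x)))) (epi (\<lambda>x. g0 x + ereal (h (G x))))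
           \<le> ereal (1 + sqrt (real CARD('m)) * \<kappa> \<rho>star * lam \<rho>hat) * trunc_haus \<rho>bar (epi f0) (epi g0)
             + ereal (\<kappa> \<rho>star) * (SUP x\<in>cball 0 \<rho>. ereal (norm (F x - G x)))"
proof -
  note A = assms
  define D where "D = trunc_haus \<rho>bar (epi f0) (epi g0)"
  have D0: "0 \<le> D" unfolding D_def trunc_haus_def using exs_nonneg by (metis max.coboundedI1)
  have Dfin: "D \<noteq> \<infinity>" using A(10) unfolding D_def[symmetric] by auto
  obtain d where Dd: "D = ereal d" using D0 Dfin by (cases D) auto
  have d0: "d \<ge> 0" using D0 Dd by simp
  have dh: "\<rho> + d < \<rho>hat" using A(10) Dd unfolding D_def[symmetric] by simp
  have rhat0: "\<rho>hat \<ge> 0" using dh d0 A(8) by linarith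
  have ex1: "exs (epi f0 \<inter> mball \<rho>bar) (epi g0) \<le> ereal d"
    using Dd unfolding D_def trunc_haus_def by (metis max.cobounded1)
  have ex2: "exs (epi g0 \<inter> mball \<rho>bar) (epi f0) \<le> ereal d"
    using Dd unfolding D_def trunc_haus_def by (metis max.cobounded2)
  have Fb: "\<forall>x\<in>cball 0 \<rho>hat. norm (F x) \<le> \<rho>star \<and> norm (G x) \<le> \<rho>star"
  proof
    fix x :: "real^'n" assume x: "x \<in> cball 0 \<rho>hat"
    have "ereal (norm (F x)) \<le> (SUP x\<in>cball 0 \<rho>hat. ereal (norm (F x)))" using x by (rule SUP_upper)
    also have "\<dots> \<le> ereal \<rho>star" using A(11) by simp
    finally have 1: "norm (F x) \<le> \<rho>star" by simp
    have "ereal (norm (G x)) \<le> (SUP x\<in>cball 0 \<rho>hat. ereal (norm (G x)))" using x by (rule SUP_upper)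
    also have "\<dots> \<le> ereal \<rho>star" using A(11) by simp
    finally have 2: "norm (G x) \<le> \<rho>star" by simp
    show "norm (F x) \<le> \<rho>star \<and> norm (G x) \<le> \<rho>star" using 1 2 by simp
  qed
  have Gb: "\<forall>x\<in>cball 0 \<rho>hat. norm (G x) \<le> \<rho>star \<and> norm (F x) \<le> \<rho>star" using Fb by blast
  have rstar0: "\<rho>star \<ge> 0" using Fb rhat0 norm_ge_zero[of "F 0"] by (metis centre_in_cball order_trans)
  have k0: "\<kappa> \<rho>star \<ge> 0" using A(3) rstar0 by simp
  have l0: "lam \<rho>hat \<ge> 0" using A(5) rhat0 by simp
  have hbF: "\<forall>x\<in>cball 0 \<rho>. \<rho> + \<bar>h (F x)\<bar> \<le> \<rho>bar"
  proof
    fix x :: "real^'n" assume x: "x \<in> cball 0 \<rho>"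
    have "ereal \<bar>h (F x)\<bar> \<le> (SUP x\<in>cball 0 \<rho>. ereal \<bar>h (F x)\<bar>)" using x by (rule SUP_upper)
    hence "ereal \<rho> + ereal \<bar>h (F x)\<bar> \<le> ereal \<rho> + max (SUP x\<in>cball 0 \<rho>. ereal \<bar>h (F x)\<bar>)
                                        (SUP x\<in>cball 0 \<rho>. ereal \<bar>h (G x)\<bar>)"
      by (intro add_left_mono) (simp add: le_max_iff_disj)
    also have "\<dots> \<le> ereal \<rho>bar" using A(9) .
    finally show "\<rho> + \<bar>h (F x)\<bar> \<le> \<rho>bar" by simp
  qed
  have hbG: "\<forall>x\<in>cball 0 \<rho>. \<rho> + \<bar>h (G x)\<bar> \<le> \<rho>bar"
  proof
    fix x :: "real^'n" assume x: "x \<in> cball 0 \<rho>"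
    have "ereal \<bar>h (G x)\<bar> \<le> (SUP x\<in>cball 0 \<rho>. ereal \<bar>h (G x)\<bar>)" using x by (rule SUP_upper)
    hence "ereal \<rho> + ereal \<bar>h (G x)\<bar> \<le> ereal \<rho> + max (SUP x\<in>cball 0 \<rho>. ereal \<bar>h (F x)\<bar>)
                                        (SUP x\<in>cball 0 \<rho>. ereal \<bar>h (G x)\<bar>)"
      by (intro add_left_mono) (simp add: le_max_iff_disj)
    also have "\<dots> \<le> ereal \<rho>bar" using A(9) .
    finally show "\<rho> + \<bar>h (G x)\<bar> \<le> \<rho>bar" by simp
  qed
  define \<eta> where "\<eta> = (SUP x\<in>cball 0 \<rho>. ereal (norm (F x - G x)))"
  have eta: "\<forall>x\<in>cball 0 \<rho>. ereal (norm (F x - G x)) \<le> \<eta>"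
    unfolding \<eta>_def by (auto intro: SUP_upper)
  have eta': "\<forall>x\<in>cball 0 \<rho>. ereal (norm (G x - F x)) \<le> \<eta>"
    using eta by (simp add: norm_minus_commute)
  have eta0: "0 \<le> \<eta>" using eta A(8) by (metis centre_in_cball ereal_less_eq(5) norm_ge_zero order_trans)
  note s1 = one_side[OF A(4) A(7) A(8) rhat0 rstar0 k0 l0 hbF dh Fb ex1 eta eta0 d0]
  note s2 = one_side[OF A(4) A(6) A(8) rhat0 rstar0 k0 l0 hbG dh Gb ex2 eta' eta0 d0]
  have eqK: "ereal (1 + sqrt (real CARD('m)) * \<kappa> \<rho>star * lam \<rho>hat) * trunc_haus \<rho>bar (epi f0) (epi g0)
     = ereal ((1 + sqrt (real CARD('m)) * \<kappa> \<rho>star * lam \<rho>hat) * d)"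
    using Dd unfolding D_def by simp
  have "trunc_haus \<rho> (epi (\<lambda>x. f0 x + ereal (h (F x)))) (epi (\<lambda>x. g0 x + ereal (h (G x))))
     \<le> ereal ((1 + sqrt (real CARD('m)) * \<kappa> \<rho>star * lam \<rho>hat) * d) + ereal (\<kappa> \<rho>star) * \<eta>"
    unfolding trunc_haus_def using s1 s2 by (rule max.boundedI)
  then show ?thesis unfolding eqK \<eta>_def .
qed

end
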